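(* Let $\mathcal E$ satisfy Assumption (i)–(v). For $x\in\mathbb R^d$ and $r\in(0,R_0]$ define $\mathcal E_r(x)=\sup_{y\in B_r(\bar y(x))}|\mathcal E(x,y)-\mathcal E(x,\bar y(x))|$. Let $0<q\le \mathcal E_\infty/2$ and $r:=\max\{s\in(0,R_0]:\sup_{x\in\mathbb R^d}\mathcal E_s(x)\le q\}$. Let $(\overline X_t,\overline Y_t)$ solve (MF) and $\rho_t^Y$ be the law of $\overline Y_t$. Then for every $t>0$ and every $x\in\mathbb R^d$ with $\rho_t^Y(B_r(\bar y(x)))>0$, $$|\bar y(x)-Y_\beta(\rho^Y_t,x)|\le\frac{(2q)^\nu}{\eta}+\frac{\exp(-\beta q)}{\rho_t^Y(B_r(\bar y(x)))}\int|y-\bar y(x)|\,\rho^Y_t(dy).$$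
   Context: Let $\mathcal{E}:\mathbb R^d\times\mathbb R^d\to\mathbb R$ be continuous, $|\cdot|$ the Euclidean norm, and $B_r(z)=\{z':\max_k|z'_k-z_k|\le r\}$ the $\ell^\infty$ ball. Weights $\omega^{\mathcal E}_\alpha(x,y)=\exp(-\alpha\mathcal E(x,y))$. For a probability measure $\rho^Y$, $Y_\beta(\rho^Y,x)=\int y\,e^{\beta\mathcal E(x,y)}\rho^Y(dy)/\int e^{\beta\mathcal E(x,y)}\rho^Y(dy)$, and $X_{\alpha,\beta}(\rho^X)=\int x\,e^{-\alpha\mathcal E(x,Y_\beta(\rho^Y,x))}\rho^X(dx)/\int e^{-\alpha\mathcal E(x,Y_\beta(\rho^Y,x))}\rho^X(dx)$. Mean-field system (MF): with $\lambda,\sigma,\alpha,\beta>0$, $D(z)=\mathrm{diag}(z_1,\dots,z_d)$, independent Brownian motions $B^X,B^Y$: $d\overline X_t=-\lambda(\overline X_t-X_{\alpha,\beta}(\rho^X_t))dt+\sigma D(\overline X_t-X_{\alpha,\beta}(\rho^X_t))dB^X_t$, $d\overline Y_t=-\lambda(\overline Y_t-Y_\beta(\rho^Y_t,\overline X_t))dt+\sigma D(\overline Y_t-Y_\beta(\rho^Y_t,\overline X_t))dB^Y_t$, $\rho^X_t,\rho^Y_t$ the laws of $\overline X_t,\overline Y_t$; a solution with finite fourth moments on bounded time intervals is assumed to exist. Assumption: (i) $\underline C_{\mathcal E}\le\mathcal E\le\overline C_{\mathcal E}$. (ii) $|\mathcal E(x_1,y_1)-\mathcal E(x_2,y_2)|\le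 L_{\mathcal E}(1+|x_1|+|x_2|+|y_1|+|y_2|)(|x_1-x_2|+|y_1-y_2|)$. (iii) for each $x$ there is a unique $\bar y(x)=\arg\max_y\mathcal E(x,y)$; with $\overline{\mathcal E}(x)=\mathcal E(x,\bar y(x))$, $x^*=\arg\min\overline{\mathcal E}$ and $y^*=\bar y(x^* )$; $|\bar y(x_1)-\bar y(x_2)|\le\bar c_1|x_1-x_2|$ and $|\bar y(x)|\le\bar c_2$ for all $x$. (iv) there are $\mathcal E_\infty,\eta,\nu,R_0>0$ such that for all $x$: $\eta|y-\bar y(x)|\le|\mathcal E(x,y)-\mathcal E(x,\bar y(x))|^\nu$ for $y\in B_{R_0}(\bar y(x))$, and $\mathcal E_\infty<\mathcal E(x,\bar y(x))-\mathcal E(x,y)$ for $y\notin B_{R_0}(\bar y(x))$. (v) for each $q>0$ there is $r\in(0,R_0]$ with $\sup_x\sup_{y\in B_r(\bar y(x))}|\mathcal E(x,y)-\mathcal E(x,\bar y(x))|\le q$. *)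

theory Defs
  imports "HOL-Probability.Probability"
begin

definition linf_ball :: "real^'n \<Rightarrow> real \<Rightarrow> (real^'n) set" where
  "linf_ball z r = {z'. \<forall>k. \<bar>z' $ k - z $ k\<bar> \<le> r}"

definition Y_beta :: "real \<Rightarrow> (real^'n \<Rightarrow> real^'n \<Rightarrow> real) \<Rightarrow> (real^'n) measure \<Rightarrow> real^'n \<Rightarrow> real^'n" where
  "Y_beta \<beta> E \<rho> x =
     (1 / (\<integral>y. exp (\<beta> * E x y) \<partial>\<rho>)) *\<^sub>R (\<integral>y. exp (\<beta> * E x y) *\<^sub>R y \<partial>\<rho>)"

definition E_r :: "(real^'n \<Rightarrow> real^'n \<Rightarrow> real) \<Rightarrow> (real^'n \<Rightarrow> real^'n) \<Rightarrow> real \<Rightarrow> real^'n \<Rightarrow> real" where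
  "E_r E ybar r x = (SUP y \<in> linf_ball (ybar x) r. \<bar>E x y - E x (ybar x)\<bar>)"

end

theory Submission
  imports Defs
begin

lemma bdd_scaleR_integrable:
  fixes f :: "'a \<Rightarrow> 'b::{banach,second_countable_topology}"
  assumes "integrable M f" "w \<in> borel_measurable M" "\<And>y. 0 \<le> w y" "\<And>y. w y \<le> C"
  shows "integrable M (\<lambda>y. w y *\<^sub>R f y)"
proof (rule Bochner_Integration.integrable_bound)
  show "integrable M (\<lambda>y. C * norm (f y))" using assms(1) by simp
  show "(\<lambda>y. w y *\<^sub>R f y) \<in> borel_measurable M" using assms(1,2) by measurable
  show "AE y in M. norm (w y *\<^sub>R f y) \<le> norm (C * norm (f y))"
  proof (rule AE_I2)
    fix y
    have "0 \<le> C" using assms(3,4) order_trans by blast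
    have "norm (w y *\<^sub>R f y) = w y * norm (f y)" using assms(3) by simp
    also have "\<dots> \<le> C * norm (f y)" by (rule mult_right_mono) (use assms(4) in auto)
    also have "\<dots> = norm (C * norm (f y))" using \<open>0 \<le> C\<close> by simp
    finally show "norm (w y *\<^sub>R f y) \<le> norm (C * norm (f y))" .
  qed
qed

theorem proposition3p2:
  fixes E :: "real^'n \<Rightarrow> real^'n \<Rightarrow> real"
    and ybar :: "real^'n \<Rightarrow> real^'n"
    and \<rho>Y :: "real \<Rightarrow> (real^'n) measure"
    and C_low C_up L_E c1 c2 E_inf \<eta> \<nu> R0 q r \<beta> t :: real
    and x :: "real^'n"
  assumes cont: "continuous_on UNIV (\<lambda>(x, y). E x y)"
    and A1: "\<And>x y. C_low \<le> E x y \<and> E x y \<le> C_up"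
    and A2: "\<And>x1 y1 x2 y2. \<bar>E x1 y1 - E x2 y2\<bar>
               \<le> L_E * (1 + norm x1 + norm x2 + norm y1 + norm y2) * (norm (x1 - x2) + norm (y1 - y2))"
    and A3_argmax: "\<And>x y. y \<noteq> ybar x \<Longrightarrow> E x y < E x (ybar x)"
    and A3_argmin: "\<exists>!xs. \<forall>x'. E xs (ybar xs) \<le> E x' (ybar x')"
    and A3_lip: "\<And>x1 x2. norm (ybar x1 - ybar x2) \<le> c1 * norm (x1 - x2)"
    and A3_bd: "\<And>x. norm (ybar x) \<le> c2"
    and pos: "E_inf > 0" "\<eta> > 0" "\<nu> > 0" "R0 > 0"
    and A4_loc: "\<And>x y. y \<in> linf_ball (ybar x) R0 \<Longrightarrow>
               \<eta> * norm (y - ybar x) \<le> \<bar>E x y - E x (ybar x)\<bar> powr \<nu>"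
    and A4_far: "\<And>x y. y \<notin> linf_ball (ybar x) R0 \<Longrightarrow> E_inf < E x (ybar x) - E x y"
    and A5: "\<And>q'. q' > 0 \<Longrightarrow> \<exists>r'. 0 < r' \<and> r' \<le> R0 \<and>
               (\<forall>x. \<forall>y \<in> linf_ball (ybar x) r'. \<bar>E x y - E x (ybar x)\<bar> \<le> q')"
    and q: "0 < q" "q \<le> E_inf / 2"
    and r_mem: "0 < r" "r \<le> R0" "(SUP x'. E_r E ybar r x') \<le> q"
    and r_max: "\<And>s. 0 < s \<Longrightarrow> s \<le> R0 \<Longrightarrow> (SUP x'. E_r E ybar s x') \<le> q \<Longrightarrow> s \<le> r"
    and \<beta>: "\<beta> > 0"
    and law_prob: "\<And>s. prob_space (\<rho>Y s)"
    and law_sets: "\<And>s. sets (\<rho>Y s) = sets borel"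
    and law_mom4: "\<And>s. integrable (\<rho>Y s) (\<lambda>y. norm y ^ 4)"
    and t: "t > 0"
    and ball_pos: "measure (\<rho>Y t) (linf_ball (ybar x) r) > 0"
  shows "norm (ybar x - Y_beta \<beta> E (\<rho>Y t) x)
           \<le> (2 * q) powr \<nu> / \<eta>
             + exp (- \<beta> * q) / measure (\<rho>Y t) (linf_ball (ybar x) r)
               * (\<integral>y. norm (y - ybar x) \<partial>(\<rho>Y t))"
proof -
  define M where "M = \<rho>Y t"
  define Eb where "Eb = E x (ybar x)"
  define B where "B = linf_ball (ybar x) r"
  define w where "w = (\<lambda>y. exp (\<beta> * E x y))"
  define Z where "Z = (\<integral>y. w y \<partial>M)"
  define mB where "mB = measure M B"
  define I where "I = (\<integral>y. norm (y - ybar x) \<partial>M)"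
  interpret P: prob_space M using law_prob M_def by simp
  have sets_M: "sets M = sets borel" using law_sets M_def by simp
  have space_M: "space M = UNIV" using sets_eq_imp_space_eq[OF sets_M] by simp
  have meas_cong: "\<And>f. f \<in> borel_measurable borel \<Longrightarrow> f \<in> borel_measurable M"
    using measurable_cong_sets[OF sets_M refl] by blast
  have meas_cong2: "\<And>f. (f::real^'n \<Rightarrow> real^'n) \<in> borel_measurable borel \<Longrightarrow> f \<in> borel_measurable M"
    using measurable_cong_sets[OF sets_M refl] by blast
  have contE: "continuous_on UNIV (E x)"
  proof -
    have "continuous_on UNIV ((\<lambda>(x, y). E x y) \<circ> (\<lambda>y. (x, y)))"
      by (rule continuous_on_compose) (auto intro!: continuous_intros continuous_on_subset[OF cont])
    then show ?thesis by (simp add: o_def)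
  qed
  have w_meas: "w \<in> borel_measurable M"
    unfolding w_def
    by (rule meas_cong, rule borel_measurable_continuous_onI)
       (auto intro!: continuous_intros continuous_on_compose2[OF continuous_on_exp] contE)
  have w_pos: "\<And>y. w y > 0" unfolding w_def by simp
  have w_bd: "\<And>y. w y \<le> exp (\<beta> * C_up)"
    unfolding w_def using A1 \<beta> by (simp add: mult_left_mono)
  have w_int: "integrable M w"
    by (rule P.integrable_const_bound[where B="exp (\<beta> * C_up)"])
       (use w_meas w_bd w_pos in \<open>auto simp: less_imp_le\<close>)
  have mom4: "integrable M (\<lambda>y. 1 + norm y ^ 4)"
  proof (rule Bochner_Integration.integrable_add)
    show "integrable M (\<lambda>y. 1::real)" by (rule P.integrable_const)
    show "integrable M (\<lambda>y. norm y ^ 4)" using law_mom4 M_def by simp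
  qed
  have id_int: "integrable M (\<lambda>y. y)"
  proof (rule Bochner_Integration.integrable_bound[OF mom4])
    show "(\<lambda>y. y) \<in> borel_measurable M" by (rule meas_cong2) simp
    show "AE y in M. norm y \<le> norm (1 + norm y ^ 4)"
    proof (rule AE_I2)
      fix y :: "real^'n"
      have "norm y \<le> 1 + norm y ^ 4"
      proof (cases "norm y \<le> 1")
        case True
        have "0 \<le> norm y ^ 4" by simp
        then show ?thesis using True by linarith
      next
        case False
        then have "norm y ^ 1 \<le> norm y ^ 4" by (intro power_increasing) auto
        then show ?thesis by simp
      qed
      then show "norm y \<le> norm (1 + norm y ^ 4)" by simp
    qed
  qed
  have c_int: "integrable M (\<lambda>y. ybar x)" by simp
  have d_int: "integrable M (\<lambda>y. y - ybar x)" using id_int c_int by (rule Bochner_Integration.integrable_diff)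
  have I_int: "integrable M (\<lambda>y. norm (y - ybar x))" using d_int by (rule integrable_norm)
  have d2_int: "integrable M (\<lambda>y. ybar x - y)" using c_int id_int by (rule Bochner_Integration.integrable_diff)
  have wd_int: "integrable M (\<lambda>y. w y *\<^sub>R (ybar x - y))"
    using bdd_scaleR_integrable[OF d2_int w_meas _ w_bd] w_pos by (simp add: less_imp_le)
  have wn_int: "integrable M (\<lambda>y. w y * norm (y - ybar x))"
    using bdd_scaleR_integrable[OF I_int w_meas _ w_bd] w_pos by (simp add: less_imp_le)
  have wy_int: "integrable M (\<lambda>y. w y *\<^sub>R y)"
    by (rule bdd_scaleR_integrable[where C="exp (\<beta> * C_up)"]) (use w_meas w_bd w_pos id_int in \<open>auto simp: less_imp_le\<close>)
  have Z_pos: "Z > 0"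
  proof -
    have "0 < (\<integral>y. exp (\<beta> * C_low) \<partial>M)" by (simp add: P.prob_space)
    also have "\<dots> \<le> Z" unfolding Z_def
      by (rule integral_mono) (use w_int A1 \<beta> in \<open>auto simp: w_def mult_left_mono\<close>)
    finally show ?thesis .
  qed
  have B_closed: "closed B"
  proof -
    have "B = (\<Inter>k. {z'. \<bar>z' $ k - ybar x $ k\<bar> \<le> r})" unfolding B_def linf_ball_def by auto
    moreover have "closed {z'::real^'n. \<bar>z' $ k - ybar x $ k\<bar> \<le> r}" for k
      by (intro closed_Collect_le continuous_intros)
    ultimately show ?thesis by auto
  qed
  have B_sets: "B \<in> sets M" using B_closed sets_M by simp
  have mB_def': "mB = measure (\<rho>Y t) (linf_ball (ybar x) r)" unfolding mB_def M_def B_def ..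
  have mB_pos: "mB > 0" using ball_pos mB_def' by simp
  have SUPq: "\<bar>E x y - Eb\<bar> \<le> q" if "y \<in> B" for y
  proof -
    have bd1: "\<And>x' y. \<bar>E x' y - E x' (ybar x')\<bar> \<le> C_up - C_low"
      using A1 by (smt (verit))
    have ne: "ybar x' \<in> linf_ball (ybar x') r" for x' using r_mem by (simp add: linf_ball_def)
    have "\<bar>E x y - Eb\<bar> \<le> E_r E ybar r x"
      unfolding E_r_def Eb_def
      by (rule cSUP_upper) (use that B_def bd1 in \<open>auto intro!: bdd_aboveI2\<close>)
    also have "\<dots> \<le> (SUP x'. E_r E ybar r x')"
    proof (rule cSUP_upper)
      show "bdd_above (range (E_r E ybar r))"
      proof (rule bdd_aboveI2)
        fix x' show "E_r E ybar r x' \<le> C_up - C_low"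
          unfolding E_r_def by (rule cSUP_least) (use ne bd1 in auto)
      qed
    qed simp
    also have "\<dots> \<le> q" using r_mem by simp
    finally show ?thesis .
  qed
  have Z_low: "mB * exp (\<beta> * (Eb - q)) \<le> Z"
  proof -
    have "mB * exp (\<beta> * (Eb - q)) = (\<integral>y. exp (\<beta> * (Eb - q)) * indicator B y \<partial>M)"
      using space_M by (simp add: mB_def)
    also have "\<dots> \<le> Z" unfolding Z_def
    proof (rule integral_mono)
      show "integrable M (\<lambda>y. exp (\<beta> * (Eb - q)) * indicator B y)"
        using B_sets by (intro integrable_mult_right integrable_real_indicator) (auto simp: P.emeasure_eq_measure)
      show "integrable M w" by (rule w_int)
      fix y assume "y \<in> space M"
      show "exp (\<beta> * (Eb - q)) * indicator B y \<le> w y"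
      proof (cases "y \<in> B")
        case True
        then have "Eb - q \<le> E x y" using SUPq by (smt (verit))
        then show ?thesis using True \<beta> unfolding w_def by (simp add: mult_left_mono)
      next
        case False then show ?thesis using w_pos by (simp add: less_imp_le)
      qed
    qed
    finally show ?thesis .
  qed
  have pw: "w y * norm (y - ybar x) \<le> (2 * q) powr \<nu> / \<eta> * w y + exp (\<beta> * (Eb - 2 * q)) * norm (y - ybar x)" for y
  proof (cases "Eb - E x y \<le> 2 * q")
    case True
    have ge: "E x y \<le> Eb" using A3_argmax[of y x] unfolding Eb_def by (cases "y = ybar x") auto
    have inR0: "y \<in> linf_ball (ybar x) R0"
    proof (rule ccontr)
      assume "y \<notin> linf_ball (ybar x) R0"
      from A4_far[OF this] True q show False unfolding Eb_def by simp
    qed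
    have "\<eta> * norm (y - ybar x) \<le> \<bar>E x y - Eb\<bar> powr \<nu>" using A4_loc[OF inR0] Eb_def by simp
    also have "\<dots> \<le> (2 * q) powr \<nu>"
      by (rule powr_mono2) (use True ge pos in auto)
    finally have "norm (y - ybar x) \<le> (2 * q) powr \<nu> / \<eta>" using pos by (simp add: field_simps)
    then have "w y * norm (y - ybar x) \<le> w y * ((2 * q) powr \<nu> / \<eta>)"
      using w_pos by (intro mult_left_mono) (auto simp: less_imp_le)
    then have "w y * norm (y - ybar x) \<le> (2 * q) powr \<nu> / \<eta> * w y"
      by (simp only: mult.commute)
    moreover have "0 \<le> exp (\<beta> * (Eb - 2 * q)) * norm (y - ybar x)" by simp
    ultimately show ?thesis by linarith
  next
    case False
    then have "w y \<le> exp (\<beta> * (Eb - 2 * q))" unfolding w_def using \<beta> by (simp add: mult_left_mono)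
    then have "w y * norm (y - ybar x) \<le> exp (\<beta> * (Eb - 2 * q)) * norm (y - ybar x)"
      by (simp add: mult_right_mono)
    moreover have "0 \<le> (2 * q) powr \<nu> / \<eta> * w y" using w_pos pos by (simp add: less_imp_le)
    ultimately show ?thesis by linarith
  qed
  have int_bound: "(\<integral>y. w y * norm (y - ybar x) \<partial>M) \<le> (2 * q) powr \<nu> / \<eta> * Z + exp (\<beta> * (Eb - 2 * q)) * I"
  proof -
    have "(\<integral>y. w y * norm (y - ybar x) \<partial>M) \<le> (\<integral>y. (2 * q) powr \<nu> / \<eta> * w y + exp (\<beta> * (Eb - 2 * q)) * norm (y - ybar x) \<partial>M)"
      by (rule integral_mono) (use wn_int w_int I_int pw in auto)
    also have "\<dots> = (2 * q) powr \<nu> / \<eta> * Z + exp (\<beta> * (Eb - 2 * q)) * I"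
      unfolding Z_def I_def using w_int I_int by simp
    finally show ?thesis .
  qed
  have diff_eq: "ybar x - Y_beta \<beta> E (\<rho>Y t) x = (1 / Z) *\<^sub>R (\<integral>y. w y *\<^sub>R (ybar x - y) \<partial>M)"
  proof -
    have "(\<integral>y. w y *\<^sub>R (ybar x - y) \<partial>M) = (\<integral>y. w y *\<^sub>R ybar x \<partial>M) - (\<integral>y. w y *\<^sub>R y \<partial>M)"
      unfolding scaleR_diff_right
      by (rule Bochner_Integration.integral_diff) (use w_int wy_int in auto)
    also have "(\<integral>y. w y *\<^sub>R ybar x \<partial>M) = Z *\<^sub>R ybar x" unfolding Z_def by (rule integral_scaleR_left) (rule w_int)
    moreover have "Y_beta \<beta> E (\<rho>Y t) x = (1 / Z) *\<^sub>R (\<integral>y. w y *\<^sub>R y \<partial>M)"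
      unfolding Y_beta_def Z_def w_def M_def ..
    ultimately show ?thesis using Z_pos
      by (simp add: scaleR_diff_right)
  qed
  have "norm (ybar x - Y_beta \<beta> E (\<rho>Y t) x) = (1 / Z) * norm (\<integral>y. w y *\<^sub>R (ybar x - y) \<partial>M)"
    using diff_eq Z_pos by simp
  also have "\<dots> \<le> (1 / Z) * (\<integral>y. w y * norm (y - ybar x) \<partial>M)"
  proof (rule mult_left_mono)
    have "norm (\<integral>y. w y *\<^sub>R (ybar x - y) \<partial>M) \<le> (\<integral>y. norm (w y *\<^sub>R (ybar x - y)) \<partial>M)"
      by (rule integral_norm_bound)
    also have "\<dots> = (\<integral>y. w y * norm (y - ybar x) \<partial>M)"
      using w_pos by (simp add: norm_minus_commute less_imp_le)
    finally show "norm (\<integral>y. w y *\<^sub>R (ybar x - y) \<partial>M) \<le> (\<integral>y. w y * norm (y - ybar x) \<partial>M)" .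
  qed (use Z_pos in simp)
  also have "\<dots> \<le> (1 / Z) * ((2 * q) powr \<nu> / \<eta> * Z + exp (\<beta> * (Eb - 2 * q)) * I)"
    by (rule mult_left_mono[OF int_bound]) (use Z_pos in simp)
  also have "\<dots> = (2 * q) powr \<nu> / \<eta> + exp (\<beta> * (Eb - 2 * q)) / Z * I"
    using Z_pos by (simp add: field_simps)
  also have "exp (\<beta> * (Eb - 2 * q)) / Z \<le> exp (- \<beta> * q) / mB"
  proof -
    have "exp (\<beta> * (Eb - 2 * q)) / Z \<le> exp (\<beta> * (Eb - 2 * q)) / (mB * exp (\<beta> * (Eb - q)))"
      by (rule divide_left_mono[OF Z_low]) (use mB_pos Z_pos in auto)
    also have "\<dots> = exp (- \<beta> * q) / mB"
    proof -
      have "exp (\<beta> * (Eb - 2 * q)) = exp (- \<beta> * q) * exp (\<beta> * (Eb - q))"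
        by (simp add: exp_add[symmetric] algebra_simps)
      then show ?thesis using mB_pos by simp
    qed
    finally show ?thesis .
  qed
  then have "(2 * q) powr \<nu> / \<eta> + exp (\<beta> * (Eb - 2 * q)) / Z * I \<le> (2 * q) powr \<nu> / \<eta> + exp (- \<beta> * q) / mB * I"
    using integral_nonneg_AE[of "\<lambda>y. norm (y - ybar x)" M] unfolding I_def
    by (intro add_left_mono mult_right_mono) auto
  finally show ?thesis unfolding mB_def' I_def M_def .
qed

end
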